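(* Let $\mathfrak{F}$ be an anchor ring (torus of revolution) in $\mathbb{E}^3$, i.e. the tube $\boldsymbol{x}(u,\phi)=\boldsymbol{a}(u)+r\cos\phi\,\boldsymbol{h}(u)+r\sin\phi\,\boldsymbol{b}(u)$ about a plane circle $\boldsymbol{a}$ of constant curvature $\kappa>0$ (torsion $\tau=0$), with $0<r<1/\kappa$. Let $W$ be any open portion of $\mathfrak{F}$ on which $\cos\phi\neq 0$ (equivalently, the Gauss curvature $K\neq 0$). Then there is no constant real $3\times 3$ matrix $A$ such that the Gauss map $\boldsymbol{N}$ of $\mathfrak{F}$ satisfies $\Delta^{II}\boldsymbol{N}=A\boldsymbol{N}$ on $W$; that is, the anchor ring is of coordinate infinite type Gauss map with respect to the second fundamental form. *)

theory Defs
  imports "HOL-Analysis.Analysis"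
begin

definition pdu :: "(real \<times> real \<Rightarrow> real^3) \<Rightarrow> real \<times> real \<Rightarrow> real^3" where
  "pdu f p = vector_derivative (\<lambda>s. f (s, snd p)) (at (fst p))"

definition pdv :: "(real \<times> real \<Rightarrow> real^3) \<Rightarrow> real \<times> real \<Rightarrow> real^3" where
  "pdv f p = vector_derivative (\<lambda>s. f (fst p, s)) (at (snd p))"

definition frenet_t :: "(real \<Rightarrow> real^3) \<Rightarrow> real \<Rightarrow> real^3" where
  "frenet_t a u = vector_derivative a (at u)"

definition frenet_h :: "(real \<Rightarrow> real^3) \<Rightarrow> real \<Rightarrow> real^3" where
  "frenet_h a u = sgn (vector_derivative (frenet_t a) (at u))"

definition frenet_b :: "(real \<Rightarrow> real^3) \<Rightarrow> real \<Rightarrow> real^3" where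
  "frenet_b a u = cross3 (frenet_t a u) (frenet_h a u)"

definition tube :: "(real \<Rightarrow> real^3) \<Rightarrow> real \<Rightarrow> real \<times> real \<Rightarrow> real^3" where
  "tube a r p = a (fst p) + (r * cos (snd p)) *\<^sub>R frenet_h a (fst p)
                          + (r * sin (snd p)) *\<^sub>R frenet_b a (fst p)"

definition circle :: "real^3 \<Rightarrow> real^3 \<Rightarrow> real^3 \<Rightarrow> real \<Rightarrow> real \<Rightarrow> real^3" where
  "circle c e1 e2 \<kappa> u = c + (1 / \<kappa>) *\<^sub>R (cos (\<kappa> * u) *\<^sub>R e1 + sin (\<kappa> * u) *\<^sub>R e2)"

definition gauss_map :: "(real \<times> real \<Rightarrow> real^3) \<Rightarrow> real \<times> real \<Rightarrow> real^3" where
  "gauss_map x p = sgn (cross3 (pdu x p) (pdv x p))"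

definition II11 :: "(real \<times> real \<Rightarrow> real^3) \<Rightarrow> real \<times> real \<Rightarrow> real" where
  "II11 x p = inner (pdu (pdu x) p) (gauss_map x p)"

definition II12 :: "(real \<times> real \<Rightarrow> real^3) \<Rightarrow> real \<times> real \<Rightarrow> real" where
  "II12 x p = inner (pdu (pdv x) p) (gauss_map x p)"

definition II22 :: "(real \<times> real \<Rightarrow> real^3) \<Rightarrow> real \<times> real \<Rightarrow> real" where
  "II22 x p = inner (pdv (pdv x) p) (gauss_map x p)"

definition IIdet :: "(real \<times> real \<Rightarrow> real^3) \<Rightarrow> real \<times> real \<Rightarrow> real" where
  "IIdet x p = II11 x p * II22 x p - (II12 x p)^2"

text \<open>Laplace operator of the (non-degenerate) second fundamental form, applied
  componentwise to a vector valued function f: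
  Delta^II f = -(1/sqrt|h|) sum_ij d_i (sqrt|h| h^ij d_j f).\<close>

definition lapII :: "(real \<times> real \<Rightarrow> real^3) \<Rightarrow> (real \<times> real \<Rightarrow> real^3) \<Rightarrow> real \<times> real \<Rightarrow> real^3" where
  "lapII x f p =
     - (1 / sqrt \<bar>IIdet x p\<bar>) *\<^sub>R
       ( pdu (\<lambda>q. (sqrt \<bar>IIdet x q\<bar> / IIdet x q) *\<^sub>R
                   (II22 x q *\<^sub>R pdu f q - II12 x q *\<^sub>R pdv f q)) p
       + pdv (\<lambda>q. (sqrt \<bar>IIdet x q\<bar> / IIdet x q) *\<^sub>R
                   (- II12 x q *\<^sub>R pdu f q + II11 x q *\<^sub>R pdv f q)) p)"

end

theory Submission
  imports Defs "HOL-Computational_Algebra.Polynomial"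
begin

definition V :: "real^3 \<Rightarrow> real^3 \<Rightarrow> real \<Rightarrow> real \<Rightarrow> real \<Rightarrow> real^3" where
  "V e1 e2 a b c = a *\<^sub>R e1 + b *\<^sub>R e2 + c *\<^sub>R cross3 e1 e2"

lemma cross_cross: "cross3 a (cross3 b c) = (inner a c) *\<^sub>R b - (inner a b) *\<^sub>R c" for a :: "real^3"
  by (simp add: cross3_simps forall_3)

lemma V_add: "V e1 e2 a b c + V e1 e2 a' b' c' = V e1 e2 (a+a') (b+b') (c+c')"
  by (simp add: V_def algebra_simps)
lemma V_diff: "V e1 e2 a b c - V e1 e2 a' b' c' = V e1 e2 (a-a') (b-b') (c-c')"
  by (simp add: V_def algebra_simps)
lemma V_scale: "t *\<^sub>R V e1 e2 a b c = V e1 e2 (t*a) (t*b) (t*c)"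
  by (simp add: V_def algebra_simps)
lemma V_minus: "- V e1 e2 a b c = V e1 e2 (-a) (-b) (-c)"
  by (simp add: V_def algebra_simps)
lemma V_mat: "A *v V e1 e2 a b c = a *\<^sub>R (A *v e1) + b *\<^sub>R (A *v e2) + c *\<^sub>R (A *v cross3 e1 e2)"
  by (simp add: V_def matrix_vector_right_distrib matrix_vector_mult_scaleR)

lemma V_deriv:
  assumes "(f has_real_derivative f') (at x)" "(g has_real_derivative g') (at x)"
    "(h has_real_derivative h') (at x)"
  shows "((\<lambda>s. c + V e1 e2 (f s) (g s) (h s)) has_vector_derivative V e1 e2 f' g' h') (at x)"
proof -
  have a: "((\<lambda>s. f s *\<^sub>R e1) has_vector_derivative (f' *\<^sub>R e1)) (at x)"
    using has_vector_derivative_scaleR[OF assms(1) has_vector_derivative_const[of e1]] by simp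
  have b: "((\<lambda>s. g s *\<^sub>R e2) has_vector_derivative (g' *\<^sub>R e2)) (at x)"
    using has_vector_derivative_scaleR[OF assms(2) has_vector_derivative_const[of e2]] by simp
  have d: "((\<lambda>s. h s *\<^sub>R cross3 e1 e2) has_vector_derivative (h' *\<^sub>R cross3 e1 e2)) (at x)"
    using has_vector_derivative_scaleR[OF assms(3) has_vector_derivative_const[of "cross3 e1 e2"]] by simp
  have "((\<lambda>s. c + (f s *\<^sub>R e1 + g s *\<^sub>R e2 + h s *\<^sub>R cross3 e1 e2)) has_vector_derivative
     0 + (f' *\<^sub>R e1 + g' *\<^sub>R e2 + h' *\<^sub>R cross3 e1 e2)) (at x)"
    by (intro has_vector_derivative_add a b d has_vector_derivative_const)
  then show ?thesis by (simp add: V_def)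
qed

lemma V_deriv0:
  assumes "(f has_real_derivative f') (at x)" "(g has_real_derivative g') (at x)"
    "(h has_real_derivative h') (at x)"
  shows "((\<lambda>s. V e1 e2 (f s) (g s) (h s)) has_vector_derivative V e1 e2 f' g' h') (at x)"
  using V_deriv[OF assms, of 0] by simp

locale orth =
  fixes e1 e2 :: "real^3"
  assumes n1: "norm e1 = 1" and n2: "norm e2 = 1" and o12: "inner e1 e2 = 0"
begin

lemma ii: "inner e1 e1 = 1" "inner e2 e2 = 1" "inner e2 e1 = 0"
   "inner (cross3 e1 e2) (cross3 e1 e2) = 1"
   "inner e1 (cross3 e1 e2) = 0" "inner e2 (cross3 e1 e2) = 0"
   "inner (cross3 e1 e2) e1 = 0" "inner (cross3 e1 e2) e2 = 0"
proof -
  show 1: "inner e1 e1 = 1" "inner e2 e2 = 1" using n1 n2 by (simp_all add: norm_eq_sqrt_inner)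
  show "inner e2 e1 = 0" using o12 by (simp add: inner_commute)
  have "(norm (cross3 e1 e2))^2 = 1" using norm_cross_dot[of e1 e2] n1 n2 o12 by simp
  then show "inner (cross3 e1 e2) (cross3 e1 e2) = 1" by (simp add: power2_norm_eq_inner)
  show "inner e1 (cross3 e1 e2) = 0" "inner e2 (cross3 e1 e2) = 0"
   "inner (cross3 e1 e2) e1 = 0" "inner (cross3 e1 e2) e2 = 0" 
    using dot_cross_self by (auto simp: inner_commute)
qed

lemma inner_V: "inner (V e1 e2 a b c) (V e1 e2 a' b' c') = a*a' + b*b' + c*c'"
  by (simp add: V_def inner_add_left inner_add_right ii o12)

lemma norm_V: "norm (V e1 e2 a b c) = sqrt (a^2 + b^2 + c^2)"
  by (simp add: norm_eq_sqrt_inner inner_V power2_eq_square)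

lemma V_eq: "V e1 e2 a b c = V e1 e2 a' b' c' \<longleftrightarrow> a = a' \<and> b = b' \<and> c = c'"
proof
  assume h: "V e1 e2 a b c = V e1 e2 a' b' c'"
  have "inner (V e1 e2 a b c) (V e1 e2 1 0 0) = inner (V e1 e2 a' b' c') (V e1 e2 1 0 0)"
       "inner (V e1 e2 a b c) (V e1 e2 0 1 0) = inner (V e1 e2 a' b' c') (V e1 e2 0 1 0)"
       "inner (V e1 e2 a b c) (V e1 e2 0 0 1) = inner (V e1 e2 a' b' c') (V e1 e2 0 0 1)"
    using h by simp_all
  then show "a = a' \<and> b = b' \<and> c = c'" by (simp add: inner_V)
qed simp

lemma cross_V: "cross3 (V e1 e2 a b c) (V e1 e2 a' b' c') = V e1 e2 (b*c' - c*b') (c*a' - a*c') (a*b' - b*a')"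
proof -
  have x1: "cross3 e2 (cross3 e1 e2) = e1" "cross3 e1 (cross3 e1 e2) = - e2"
    "cross3 (cross3 e1 e2) e1 = e2" "cross3 (cross3 e1 e2) e2 = - e1"
  proof -
    show a: "cross3 e2 (cross3 e1 e2) = e1" "cross3 e1 (cross3 e1 e2) = - e2"
      by (simp_all add: cross_cross ii o12)
    show "cross3 (cross3 e1 e2) e1 = e2" 
      using a(2) cross_skew[of "cross3 e1 e2" e1] by simp
    show "cross3 (cross3 e1 e2) e2 = - e1" 
      using a(1) cross_skew[of "cross3 e1 e2" e2] by simp
  qed
  have x2: "cross3 e2 e1 = - cross3 e1 e2" by (rule cross_skew)
  show ?thesis
    by (simp add: V_def cross_add_left cross_add_right cross_mult_left cross_mult_right x1 x2 algebra_simps)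
qed

end

locale tor = orth +
  fixes c :: "real^3" and k r :: real
  assumes kp: "k > 0" and rp: "0 < r" and rk: "r < 1 / k"
begin

lemma rho_pos: "1/k - r * cos t > 0"
proof -
  have "r * cos t \<le> r" using rp by (simp add: mult_left_le)
  then show ?thesis using rk by linarith
qed

lemma circ: "circle c e1 e2 k = (\<lambda>u. c + V e1 e2 (cos(k*u)/k) (sin(k*u)/k) 0)"
  by (rule ext) (simp add: circle_def V_def scaleR_add_right)

lemma ft: "frenet_t (circle c e1 e2 k) = (\<lambda>u. V e1 e2 (-sin(k*u)) (cos(k*u)) 0)"
proof (rule ext)
  fix u
  show "frenet_t (circle c e1 e2 k) u = V e1 e2 (-sin(k*u)) (cos(k*u)) 0"
    unfolding frenet_t_def circ
    by (rule vector_derivative_at, rule V_deriv) 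
       (use kp in \<open>auto intro!: derivative_eq_intros simp: field_simps\<close>)
qed


lemma fh: "frenet_h (circle c e1 e2 k) = (\<lambda>u. V e1 e2 (-cos(k*u)) (-sin(k*u)) 0)"
proof (rule ext)
  fix u
  have d: "vector_derivative (frenet_t (circle c e1 e2 k)) (at u) = V e1 e2 (- k * cos (k * u)) (- k * sin (k * u)) 0"
    unfolding ft
    by (rule vector_derivative_at, rule V_deriv0) 
       (use kp in \<open>auto intro!: derivative_eq_intros simp: field_simps\<close>)
  have nn: "norm (V e1 e2 (- k * cos (k * u)) (- k * sin (k * u)) 0) = k"
  proof -
    have "(- k * cos (k * u))^2 + (- k * sin (k * u))^2 + 0^2 = k^2"
      by (simp add: power_mult_distrib flip: distrib_left)
    then show ?thesis using n1 n2 o12 kp by (simp add: norm_V)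
  qed
  show "frenet_h (circle c e1 e2 k) u = V e1 e2 (-cos(k*u)) (-sin(k*u)) 0"
    unfolding frenet_h_def d sgn_div_norm nn using kp by (simp add: V_scale field_simps)
qed

lemma fb: "frenet_b (circle c e1 e2 k) = (\<lambda>u. V e1 e2 0 0 1)"
proof (rule ext)
  fix u
  have "(- sin (k * u)) * (- sin (k * u)) - cos (k * u) * (- cos (k * u)) = 1"
    by (simp flip: power2_eq_square)
  then show "frenet_b (circle c e1 e2 k) u = V e1 e2 0 0 1"
    unfolding frenet_b_def ft fh using n1 n2 o12 by (simp add: cross_V)
qed

lemma tb: "tube (circle c e1 e2 k) r = (\<lambda>q. c + V e1 e2 ((1/k - r*cos (snd q)) * cos(k*fst q))
     ((1/k - r*cos (snd q)) * sin(k*fst q)) (r * sin (snd q)))"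
  by (rule ext) (simp only: tube_def fh fb, simp add: circ V_scale V_add algebra_simps)

lemma Xu: "pdu (tube (circle c e1 e2 k) r) = (\<lambda>q. V e1 e2 (- (1 - r*k*cos (snd q)) * sin (k*fst q)) ((1 - r*k*cos (snd q)) * cos (k*fst q)) 0)"
proof (rule ext)
  fix q
  show "pdu (tube (circle c e1 e2 k) r) q = V e1 e2 (- (1 - r*k*cos (snd q)) * sin (k*fst q)) ((1 - r*k*cos (snd q)) * cos (k*fst q)) 0"
    unfolding pdu_def tb by (rule vector_derivative_at, simp only: fst_conv snd_conv, rule V_deriv)
       (use kp in \<open>auto intro!: derivative_eq_intros simp: field_simps\<close>)
qed

lemma Xv: "pdv (tube (circle c e1 e2 k) r) = (\<lambda>q. V e1 e2 (r * sin (snd q) * cos (k*fst q)) (r * sin (snd q) * sin (k*fst q)) (r * cos (snd q)))"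
proof (rule ext)
  fix q
  show "pdv (tube (circle c e1 e2 k) r) q = V e1 e2 (r * sin (snd q) * cos (k*fst q)) (r * sin (snd q) * sin (k*fst q)) (r * cos (snd q))"
    unfolding pdv_def tb by (rule vector_derivative_at, simp only: fst_conv snd_conv, rule V_deriv)
       (use kp in \<open>auto intro!: derivative_eq_intros simp: field_simps\<close>)
qed

lemma Xuu: "pdu (pdu (tube (circle c e1 e2 k) r)) = (\<lambda>q. V e1 e2 (- k * (1 - r*k*cos (snd q)) * cos (k*fst q)) (- k * (1 - r*k*cos (snd q)) * sin (k*fst q)) 0)"
proof (rule ext)
  fix q
  show "pdu (pdu (tube (circle c e1 e2 k) r)) q = V e1 e2 (- k * (1 - r*k*cos (snd q)) * cos (k*fst q)) (- k * (1 - r*k*cos (snd q)) * sin (k*fst q)) 0"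
    unfolding pdu_def Xu by (rule vector_derivative_at, simp only: fst_conv snd_conv, rule V_deriv0)
       (use kp in \<open>auto intro!: derivative_eq_intros simp: field_simps\<close>)
qed

lemma Xvu: "pdu (pdv (tube (circle c e1 e2 k) r)) = (\<lambda>q. V e1 e2 (- k * r * sin (snd q) * sin (k*fst q)) (k * r * sin (snd q) * cos (k*fst q)) 0)"
proof (rule ext)
  fix q
  show "pdu (pdv (tube (circle c e1 e2 k) r)) q = V e1 e2 (- k * r * sin (snd q) * sin (k*fst q)) (k * r * sin (snd q) * cos (k*fst q)) 0"
    unfolding pdu_def Xv by (rule vector_derivative_at, simp only: fst_conv snd_conv, rule V_deriv0)
       (use kp in \<open>auto intro!: derivative_eq_intros simp: field_simps\<close>)
qed

lemma Xvv: "pdv (pdv (tube (circle c e1 e2 k) r)) = (\<lambda>q. V e1 e2 (r * cos (snd q) * cos (k*fst q)) (r * cos (snd q) * sin (k*fst q)) (- r * sin (snd q)))"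
proof (rule ext)
  fix q
  show "pdv (pdv (tube (circle c e1 e2 k) r)) q = V e1 e2 (r * cos (snd q) * cos (k*fst q)) (r * cos (snd q) * sin (k*fst q)) (- r * sin (snd q))"
    unfolding pdv_def Xv by (rule vector_derivative_at, simp only: fst_conv snd_conv, rule V_deriv0)
       (use kp in \<open>auto intro!: derivative_eq_intros simp: field_simps\<close>)
qed


lemma P_pos: "1 - r*k*cos t > 0"
  using rho_pos[of t] kp by (simp add: field_simps)

lemma normN: "norm (V e1 e2 (cos t * cos a) (cos t * sin a) (- sin t)) = 1"
proof -
  have "(cos t * cos a)^2 + (cos t * sin a)^2 + (- sin t)^2 = 1"
    by (simp add: power_mult_distrib flip: distrib_left)
  then show ?thesis using n1 n2 o12 by (simp add: norm_V)
qed

lemma crossaux: "cross3 (V e1 e2 (- P * sin u) (P * cos u) 0) (V e1 e2 (z * sin t * cos u) (z * sin t * sin u) (z * cos t))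
   = (P*z) *\<^sub>R V e1 e2 (cos t * cos u) (cos t * sin u) (- sin t)"
proof -
  have h: "cos u * cos u = 1 - sin u * sin u" using sin_cos_squared_add[of u] by (simp add: power2_eq_square)
  have e: "sin u * sin u + cos u * cos u = 1" by (simp flip: power2_eq_square)
  have "- P * sin u * (z * sin t * sin u) - P * cos u * (z * sin t * cos u) = - (P*z* sin t) * (sin u * sin u + cos u * cos u)"
    by algebra
  then have "- P * sin u * (z * sin t * sin u) - P * cos u * (z * sin t * cos u) = P * z * (- sin t)"
    by (simp add: e)
  then show ?thesis using n1 n2 o12 by (simp add: cross_V V_scale V_eq algebra_simps)
qed

lemma sgnaux: "x > 0 \<Longrightarrow> norm v = 1 \<Longrightarrow> (x *\<^sub>R v) /\<^sub>R norm (x *\<^sub>R v) = v" for v :: "real^3"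
  by simp

lemma gm: "gauss_map (tube (circle c e1 e2 k) r) = (\<lambda>q. V e1 e2 (cos (snd q) * cos (k*fst q)) (cos (snd q) * sin (k*fst q)) (- sin (snd q)))"
proof (rule ext)
  fix q :: "real \<times> real"
  have Pp: "(1 - r*k*cos (snd q)) * r > 0" using P_pos rp by simp
  show "gauss_map (tube (circle c e1 e2 k) r) q = V e1 e2 (cos (snd q) * cos (k*fst q)) (cos (snd q) * sin (k*fst q)) (- sin (snd q))"
    unfolding gauss_map_def sgn_div_norm Xu Xv crossaux using Pp normN[of "snd q" "k * fst q"]
    by (rule sgnaux)
qed

lemma Nu: "pdu (gauss_map (tube (circle c e1 e2 k) r)) = (\<lambda>q. V e1 e2 (- k * cos (snd q) * sin (k*fst q)) (k * cos (snd q) * cos (k*fst q)) 0)"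
proof (rule ext)
  fix q
  show "pdu (gauss_map (tube (circle c e1 e2 k) r)) q = V e1 e2 (- k * cos (snd q) * sin (k*fst q)) (k * cos (snd q) * cos (k*fst q)) 0"
    unfolding pdu_def gm by (rule vector_derivative_at, simp only: fst_conv snd_conv, rule V_deriv0)
       (use kp in \<open>auto intro!: derivative_eq_intros simp: field_simps\<close>)
qed

lemma Nv: "pdv (gauss_map (tube (circle c e1 e2 k) r)) = (\<lambda>q. V e1 e2 (- sin (snd q) * cos (k*fst q)) (- sin (snd q) * sin (k*fst q)) (- cos (snd q)))"
proof (rule ext)
  fix q
  show "pdv (gauss_map (tube (circle c e1 e2 k) r)) q = V e1 e2 (- sin (snd q) * cos (k*fst q)) (- sin (snd q) * sin (k*fst q)) (- cos (snd q))"
    unfolding pdv_def gm by (rule vector_derivative_at, simp only: fst_conv snd_conv, rule V_deriv0)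
       (use kp in \<open>auto intro!: derivative_eq_intros simp: field_simps\<close>)
qed


lemma aux1: "x*a*(y*a) + x*b*(y*b) = x*y*(a^2+b^2)" for x y a b :: real
  by (simp add: algebra_simps power2_eq_square)
lemma aux2: "z*C*a*(C*a) + z*C*b*(C*b) + (-z*S)*(-S) = z*(C^2*(a^2+b^2) + S^2)" for z C S a b :: real
  by (simp add: algebra_simps power2_eq_square)

lemma h11: "II11 (tube (circle c e1 e2 k) r) q = - k * (1 - r*k*cos (snd q)) * cos (snd q)"
  unfolding II11_def Xuu gm inner_V aux1 by simp

lemma h12: "II12 (tube (circle c e1 e2 k) r) q = 0"
  unfolding II12_def Xvu gm using n1 n2 o12 by (simp add: inner_V algebra_simps)

lemma h22: "II22 (tube (circle c e1 e2 k) r) q = r"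
  unfolding II22_def Xvv gm inner_V aux2 by simp

lemma hdet: "IIdet (tube (circle c e1 e2 k) r) q = - k * r * (1 - r*k*cos (snd q)) * cos (snd q)"
  unfolding IIdet_def h11 h12 h22 by simp


end
context tor begin
definition "DD t = - k * r * (1 - r*k*cos t) * cos t"
definition "DD' t = - k * r * ((r*k* sin t) * cos t - (1 - r*k*cos t) * sin t)"

lemma DD_deriv: "(DD has_real_derivative DD' t) (at t)"
  unfolding DD_def[abs_def] DD'_def by (auto intro!: derivative_eq_intros simp: algebra_simps)

lemma hdet': "IIdet (tube (circle c e1 e2 k) r) q = DD (snd q)"
  unfolding hdet DD_def by simp

lemma G1fun: "(\<lambda>q. (sqrt \<bar>IIdet (tube (circle c e1 e2 k) r) q\<bar> / IIdet (tube (circle c e1 e2 k) r) q) *\<^sub>R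
                   (II22 (tube (circle c e1 e2 k) r) q *\<^sub>R pdu (gauss_map (tube (circle c e1 e2 k) r)) q - II12 (tube (circle c e1 e2 k) r) q *\<^sub>R pdv (gauss_map (tube (circle c e1 e2 k) r)) q))
  = (\<lambda>q. V e1 e2 ((sqrt \<bar>DD (snd q)\<bar> / DD (snd q) * r * k * cos (snd q)) * (- sin (k * fst q)))
       ((sqrt \<bar>DD (snd q)\<bar> / DD (snd q) * r * k * cos (snd q)) * cos (k * fst q)) 0)"
  by (rule ext) (simp add: hdet' h22 h12 Nu V_scale mult.assoc)

lemma G2fun: "(\<lambda>q. (sqrt \<bar>IIdet (tube (circle c e1 e2 k) r) q\<bar> / IIdet (tube (circle c e1 e2 k) r) q) *\<^sub>R
                   (- II12 (tube (circle c e1 e2 k) r) q *\<^sub>R pdu (gauss_map (tube (circle c e1 e2 k) r)) q + II11 (tube (circle c e1 e2 k) r) q *\<^sub>R pdv (gauss_map (tube (circle c e1 e2 k) r)) q))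
  = (\<lambda>q. V e1 e2 (sqrt (sqrt ((DD (snd q))^2)) / r * (- sin (snd q) * cos (k*fst q)))
        (sqrt (sqrt ((DD (snd q))^2)) / r * (- sin (snd q) * sin (k*fst q)))
        (sqrt (sqrt ((DD (snd q))^2)) / r * (- cos (snd q))))"
proof (rule ext)
  fix q :: "real \<times> real"
  have e: "sqrt \<bar>DD (snd q)\<bar> / DD (snd q) * II11 (tube (circle c e1 e2 k) r) q = sqrt (sqrt ((DD (snd q))^2)) / r"
  proof (cases "DD (snd q) = 0")
    case True then show ?thesis by simp
  next
    case False
    have "DD (snd q) = r * II11 (tube (circle c e1 e2 k) r) q" unfolding h11 DD_def by simp
    then have "II11 (tube (circle c e1 e2 k) r) q = DD (snd q) / r" using rp by simp
    then show ?thesis using False by (simp add: real_sqrt_abs)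
  qed
  have "(sqrt \<bar>IIdet (tube (circle c e1 e2 k) r) q\<bar> / IIdet (tube (circle c e1 e2 k) r) q) *\<^sub>R
                   (- II12 (tube (circle c e1 e2 k) r) q *\<^sub>R pdu (gauss_map (tube (circle c e1 e2 k) r)) q + II11 (tube (circle c e1 e2 k) r) q *\<^sub>R pdv (gauss_map (tube (circle c e1 e2 k) r)) q)
      = (sqrt \<bar>DD (snd q)\<bar> / DD (snd q) * II11 (tube (circle c e1 e2 k) r) q) *\<^sub>R pdv (gauss_map (tube (circle c e1 e2 k) r)) q"
    by (simp add: hdet' h12)
  also have "\<dots> = V e1 e2 (sqrt (sqrt ((DD (snd q))^2)) / r * (- sin (snd q) * cos (k*fst q)))
        (sqrt (sqrt ((DD (snd q))^2)) / r * (- sin (snd q) * sin (k*fst q)))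
        (sqrt (sqrt ((DD (snd q))^2)) / r * (- cos (snd q)))"
    unfolding e Nv V_scale by simp
  finally show "(sqrt \<bar>IIdet (tube (circle c e1 e2 k) r) q\<bar> / IIdet (tube (circle c e1 e2 k) r) q) *\<^sub>R
                   (- II12 (tube (circle c e1 e2 k) r) q *\<^sub>R pdu (gauss_map (tube (circle c e1 e2 k) r)) q + II11 (tube (circle c e1 e2 k) r) q *\<^sub>R pdv (gauss_map (tube (circle c e1 e2 k) r)) q) = 
     V e1 e2 (sqrt (sqrt ((DD (snd q))^2)) / r * (- sin (snd q) * cos (k*fst q)))
        (sqrt (sqrt ((DD (snd q))^2)) / r * (- sin (snd q) * sin (k*fst q)))
        (sqrt (sqrt ((DD (snd q))^2)) / r * (- cos (snd q)))" .
qed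


lemma G1d: "pdu (\<lambda>q. V e1 e2 (a (snd q) * (- sin (k * fst q))) (a (snd q) * cos (k * fst q)) 0) p
   = V e1 e2 (- k * a (snd p) * cos (k * fst p)) (- k * a (snd p) * sin (k * fst p)) 0"
  unfolding pdu_def by (rule vector_derivative_at, simp only: fst_conv snd_conv, rule V_deriv0)
       (auto intro!: derivative_eq_intros simp: field_simps)

lemma G2d: assumes "(w has_real_derivative w') (at (snd p))"
  shows "pdv (\<lambda>q. V e1 e2 (w (snd q) * (- sin (snd q) * cos (k*fst q))) (w (snd q) * (- sin (snd q) * sin (k*fst q))) (w (snd q) * (- cos (snd q)))) p
   = V e1 e2 (w' * (- sin (snd p) * cos (k*fst p)) + w (snd p) * (- cos (snd p) * cos (k*fst p)))
      (w' * (- sin (snd p) * sin (k*fst p)) + w (snd p) * (- cos (snd p) * sin (k*fst p)))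
      (w' * (- cos (snd p)) + w (snd p) * sin (snd p))"
  unfolding pdv_def by (rule vector_derivative_at, simp only: fst_conv snd_conv, rule V_deriv0)
       (auto intro!: derivative_eq_intros assms simp: field_simps)

definition "W' t = DD t * DD' t / (2 * r * \<bar>DD t\<bar> * sqrt \<bar>DD t\<bar>)"

lemma DD_deriv_within: "(DD has_real_derivative DD' t) (at t within S)"
  using DD_deriv has_field_derivative_at_within by blast

lemma w_deriv: assumes "DD t \<noteq> 0"
  shows "((\<lambda>s. sqrt (sqrt ((DD s)^2)) / r) has_real_derivative W' t) (at t)"
  using assms rp unfolding W'_def
  apply (auto intro!: derivative_eq_intros DD_deriv_within simp del: real_sqrt_abs)
  apply (simp add: field_simps)
  done

lemma DD_nz: "cos t \<noteq> 0 \<Longrightarrow> DD t \<noteq> 0"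
  using P_pos[of t] kp rp unfolding DD_def by simp


lemma W'_alt: "DD t \<noteq> 0 \<Longrightarrow> W' t = DD' t * sqrt \<bar>DD t\<bar> / (2 * r * DD t)"
proof -
  assume D: "DD t \<noteq> 0"
  have s: "sqrt \<bar>DD t\<bar> * sqrt \<bar>DD t\<bar> = \<bar>DD t\<bar>" by simp
  have a: "DD t * DD t = \<bar>DD t\<bar> * \<bar>DD t\<bar>" by simp
  have sp: "sqrt \<bar>DD t\<bar> > 0" using D by simp
  have "DD t / (\<bar>DD t\<bar> * sqrt \<bar>DD t\<bar>) = sqrt \<bar>DD t\<bar> / DD t"
    using D sp by (simp add: divide_simps) (metis a s mult.assoc mult.commute)
  moreover have "DD t * DD' t / (2 * r * \<bar>DD t\<bar> * sqrt \<bar>DD t\<bar>) = DD' t / (2*r) * (DD t / (\<bar>DD t\<bar> * sqrt \<bar>DD t\<bar>))"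
    using D sp rp by (simp add: field_simps)
  ultimately have "DD t * DD' t / (2 * r * \<bar>DD t\<bar> * sqrt \<bar>DD t\<bar>) = DD' t / (2*r) * (sqrt \<bar>DD t\<bar> / DD t)"
    by simp
  then show ?thesis unfolding W'_def by simp
qed

definition "LL t = r*k^2*cos t/DD t + DD' t * sin t/(2*r*DD t) + cos t/r"
definition "MM t = -(1/sqrt\<bar>DD t\<bar>) * (W' t * (- cos t) + sqrt \<bar>DD t\<bar>/r * sin t)"

lemma lap: assumes "cos (snd p) \<noteq> 0"
  shows "lapII (tube (circle c e1 e2 k) r) (gauss_map (tube (circle c e1 e2 k) r)) p = V e1 e2 (LL (snd p) * cos (k*fst p)) (LL (snd p) * sin (k * fst p)) (MM (snd p))"
proof -
  define t where "t = snd p"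
  define u where "u = k * fst p"
  have D: "DD t \<noteq> 0" using DD_nz assms t_def by simp
  have 1: "pdu (\<lambda>q. (sqrt \<bar>IIdet (tube (circle c e1 e2 k) r) q\<bar> / IIdet (tube (circle c e1 e2 k) r) q) *\<^sub>R
                   (II22 (tube (circle c e1 e2 k) r) q *\<^sub>R pdu (gauss_map (tube (circle c e1 e2 k) r)) q - II12 (tube (circle c e1 e2 k) r) q *\<^sub>R pdv (gauss_map (tube (circle c e1 e2 k) r)) q)) p
     = V e1 e2 (- k * (sqrt \<bar>DD t\<bar> / DD t * r * k * cos t) * cos u) (- k * (sqrt \<bar>DD t\<bar> / DD t * r * k * cos t) * sin u) 0"
    unfolding G1fun using G1d[of "\<lambda>t. sqrt \<bar>DD t\<bar> / DD t * r * k * cos t" p] by (simp add: t_def u_def)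
  have 2: "pdv (\<lambda>q. (sqrt \<bar>IIdet (tube (circle c e1 e2 k) r) q\<bar> / IIdet (tube (circle c e1 e2 k) r) q) *\<^sub>R
                   (- II12 (tube (circle c e1 e2 k) r) q *\<^sub>R pdu (gauss_map (tube (circle c e1 e2 k) r)) q + II11 (tube (circle c e1 e2 k) r) q *\<^sub>R pdv (gauss_map (tube (circle c e1 e2 k) r)) q)) p
     = V e1 e2 (W' t * (- sin t * cos u) + sqrt \<bar>DD t\<bar> / r * (- cos t * cos u))
      (W' t * (- sin t * sin u) + sqrt \<bar>DD t\<bar> / r * (- cos t * sin u))
      (W' t * (- cos t) + sqrt \<bar>DD t\<bar> / r * sin t)"
    unfolding G2fun using G2d[OF w_deriv[OF D[unfolded t_def]]] by (simp add: t_def u_def)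
  have s: "sqrt \<bar>DD t\<bar> > 0" using D by simp
  show ?thesis
    unfolding lapII_def 1 2 unfolding hdet' t_def[symmetric] u_def[symmetric] V_add V_scale V_eq
    using D s
    apply (simp add: LL_def MM_def W'_alt field_simps power2_eq_square)
    done
qed


lemma LLc: assumes "cos t \<noteq> 0"
  shows "LL t / cos t * (2*r*(1 - r*k*cos t)*(cos t)^2) = 3*(cos t)^2 - 4*r*k*(cos t)^3 - 1"
proof -
  have P: "1 - r*k*cos t \<noteq> 0" using P_pos[of t] by simp
  have D: "DD t \<noteq> 0" using DD_nz assms by simp
  have ss: "(sin t)^2 = 1 - (cos t)^2" by (simp add: sin_squared_eq)
  show ?thesis using assms P D rp kp unfolding LL_def
    apply (simp add: field_simps)
    apply (simp add: DD_def DD'_def)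
    using ss by algebra
qed

end

theorem corollary1:
  fixes c e1 e2 :: "real^3" and \<kappa> r :: real and W :: "(real \<times> real) set"
  assumes "norm e1 = 1" and "norm e2 = 1" and "inner e1 e2 = 0"
    and "\<kappa> > 0" and "0 < r" and "r < 1 / \<kappa>"
    and "open W" and "W \<noteq> {}" and "\<forall>p\<in>W. cos (snd p) \<noteq> 0"
  shows "\<not> (\<exists>A :: real^3^3. \<forall>p\<in>W.
            lapII (tube (circle c e1 e2 \<kappa>) r) (gauss_map (tube (circle c e1 e2 \<kappa>) r)) p
              = A *v gauss_map (tube (circle c e1 e2 \<kappa>) r) p)"
proof
  assume "\<exists>A :: real^3^3. \<forall>p\<in>W.
            lapII (tube (circle c e1 e2 \<kappa>) r) (gauss_map (tube (circle c e1 e2 \<kappa>) r)) p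
              = A *v gauss_map (tube (circle c e1 e2 \<kappa>) r) p"
  then obtain A :: "real^3^3" where hA: "\<forall>p\<in>W.
            lapII (tube (circle c e1 e2 \<kappa>) r) (gauss_map (tube (circle c e1 e2 \<kappa>) r)) p
              = A *v gauss_map (tube (circle c e1 e2 \<kappa>) r) p" by blast
  interpret tor e1 e2 c \<kappa> r by unfold_locales (use assms in auto)
  obtain p0 where p0: "p0 \<in> W" using assms(8) by blast
  obtain \<delta> where dp: "\<delta> > 0" and bW: "ball p0 \<delta> \<subseteq> W"
    using assms(7) p0 open_contains_ball by blast
  define u0 where "u0 = fst p0"
  define t0 where "t0 = snd p0"
  define h where "h = min (\<delta>/2) (pi/(2*\<kappa>))"
  define \<epsilon> where "\<epsilon> = \<delta>/2"
  have hp: "h > 0" using dp assms(4) unfolding h_def by simp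
  have ep: "\<epsilon> > 0" using dp unfolding \<epsilon>_def by simp
  have inW: "(u, t) \<in> W" if "\<bar>u - u0\<bar> \<le> h" "\<bar>t - t0\<bar> < \<epsilon>" for u t
  proof -
    have "dist (u, t) p0 \<le> dist (u, t) (u0, t) + dist (u0, t) p0" by (rule dist_triangle)
    also have "\<dots> = \<bar>u - u0\<bar> + \<bar>t - t0\<bar>"
      unfolding u0_def t0_def by (cases p0) (simp add: dist_Pair_Pair dist_real_def)
    also have "\<dots> < \<delta>" using that unfolding h_def \<epsilon>_def by simp
    finally show ?thesis using bW by (auto simp: dist_commute)
  qed
  define u1 where "u1 = u0 + h"
  define z1 where "z1 = A *v e1"
  define z2 where "z2 = A *v e2"
  define z3 where "z3 = A *v cross3 e1 e2"
  define C0 where "C0 = cos (\<kappa> * u0)"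
  define S0 where "S0 = sin (\<kappa> * u0)"
  define C1 where "C1 = cos (\<kappa> * u1)"
  define S1 where "S1 = sin (\<kappa> * u1)"
  define d where "d = V e1 e2 (C0 - C1) (S0 - S1) 0"
  define y where "y = (C0 - C1) *\<^sub>R z1 + (S0 - S1) *\<^sub>R z2"
  have dnz: "d \<noteq> 0"
  proof
    assume "d = 0"
    then have "d = V e1 e2 0 0 0" by (simp add: V_def)
    then have "C0 = C1" "S0 = S1" unfolding d_def V_eq by auto
    then have "cos (\<kappa> * u1 - \<kappa> * u0) = 1"
      unfolding cos_diff C0_def C1_def S0_def S1_def by (simp flip: power2_eq_square)
    moreover have "\<kappa> * u1 - \<kappa> * u0 = \<kappa> * h" unfolding u1_def by (simp add: algebra_simps)
    moreover have "cos (\<kappa> * h) < cos 0"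
    proof (rule cos_monotone_0_pi)
      show "0 < \<kappa> * h" using hp assms(4) by simp
      have "h \<le> pi/(2*\<kappa>)" unfolding h_def by simp
      then have "\<kappa> * h \<le> \<kappa> * (pi/(2*\<kappa>))" using assms(4) by (intro mult_left_mono) auto
      also have "\<dots> = pi/2" using assms(4) by simp
      finally show "\<kappa> * h \<le> pi" using pi_gt_zero by linarith
    qed simp
    ultimately show False by simp
  qed
  have key: "LL t *\<^sub>R d = cos t *\<^sub>R y" if t: "\<bar>t - t0\<bar> < \<epsilon>" for t
  proof -
    have w0: "(u0, t) \<in> W" and w1: "(u1, t) \<in> W" using inW t hp unfolding u1_def by auto
    have ct: "cos t \<noteq> 0" using w0 assms(9) by auto
    have e0: "V e1 e2 (LL t * C0) (LL t * S0) (MM t) = (cos t * C0) *\<^sub>R z1 + (cos t * S0) *\<^sub>R z2 + (- sin t) *\<^sub>R z3"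
      using hA w0 lap[of "(u0, t)"] ct unfolding gm C0_def S0_def z1_def z2_def z3_def V_mat by simp
    have e1': "V e1 e2 (LL t * C1) (LL t * S1) (MM t) = (cos t * C1) *\<^sub>R z1 + (cos t * S1) *\<^sub>R z2 + (- sin t) *\<^sub>R z3"
      using hA w1 lap[of "(u1, t)"] ct unfolding gm C1_def S1_def z1_def z2_def z3_def V_mat by simp
    have "V e1 e2 (LL t * C0) (LL t * S0) (MM t) - V e1 e2 (LL t * C1) (LL t * S1) (MM t)
       = cos t *\<^sub>R y" unfolding e0 e1' y_def by (simp add: algebra_simps)
    then show ?thesis unfolding V_diff d_def V_scale by (simp add: algebra_simps)
  qed
  define K where "K = LL t0 / cos t0"
  have ct0: "cos t0 \<noteq> 0" using assms(9) p0 unfolding t0_def by auto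
  have yK: "y = K *\<^sub>R d"
  proof -
    have "y = (1 / cos t0) *\<^sub>R (cos t0 *\<^sub>R y)" using ct0 by simp
    also have "\<dots> = (1 / cos t0) *\<^sub>R (LL t0 *\<^sub>R d)" using key[of t0] ep by simp
    also have "\<dots> = K *\<^sub>R d" unfolding K_def by simp
    finally show ?thesis .
  qed
  have LK: "LL t / cos t = K" if t: "\<bar>t - t0\<bar> < \<epsilon>" for t
  proof -
    have ct: "cos t \<noteq> 0" using inW[of u0 t] t hp assms(9) by auto
    have "LL t *\<^sub>R d = (cos t * K) *\<^sub>R d" using key[OF t] unfolding yK by simp
    then have "(LL t - cos t * K) *\<^sub>R d = 0" by (simp add: algebra_simps)
    then have "LL t = cos t * K" using dnz by simp
    then show ?thesis using ct by simp
  qed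
  define pp where "pp = [:-1, 0, 3 - 2*K*r, 2*K*r*r*\<kappa> - 4*r*\<kappa>:]"
  have ppnz: "pp \<noteq> 0" unfolding pp_def by simp
  have roots: "cos ` {t0 - \<epsilon> <..< t0 + \<epsilon>} \<subseteq> {x. poly pp x = 0}"
  proof
    fix x assume "x \<in> cos ` {t0 - \<epsilon> <..< t0 + \<epsilon>}"
    then obtain t where t: "t \<in> {t0 - \<epsilon> <..< t0 + \<epsilon>}" and x: "x = cos t" by blast
    have ta: "\<bar>t - t0\<bar> < \<epsilon>" using t by auto
    have ct: "cos t \<noteq> 0" using inW[of u0 t] ta hp assms(9) by auto
    have "3*(cos t)^2 - 4*r*\<kappa>*(cos t)^3 - 1 = K * (2*r*(1 - r*\<kappa>*cos t)*(cos t)^2)"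
      using LLc[OF ct] LK[OF ta] by simp
    then show "x \<in> {x. poly pp x = 0}" unfolding pp_def x by (simp add: algebra_simps power2_eq_square power3_eq_cube)
  qed
  have fin: "finite (cos ` {t0 - \<epsilon> <..< t0 + \<epsilon>})"
    using finite_subset[OF roots poly_roots_finite[OF ppnz]] .
  have conn: "connected (cos ` {t0 - \<epsilon> <..< t0 + \<epsilon>})"
    by (rule connected_continuous_image) (auto intro: continuous_intros)
  obtain a where single: "cos ` {t0 - \<epsilon> <..< t0 + \<epsilon>} = {a}"
    using connected_finite_iff_sing[OF conn] fin ep by auto
  define \<tau> where "\<tau> = min (\<epsilon>/2) (pi/2)"
  have taup: "\<tau> > 0" using ep unfolding \<tau>_def by simp
  have tle: "\<tau> < \<epsilon>" using ep unfolding \<tau>_def by simp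
  have "t0 + \<tau> \<in> {t0 - \<epsilon> <..< t0 + \<epsilon>}" "t0 - \<tau> \<in> {t0 - \<epsilon> <..< t0 + \<epsilon>}"
     "t0 \<in> {t0 - \<epsilon> <..< t0 + \<epsilon>}" using tle taup by auto
  then have "cos (t0 + \<tau>) \<in> {a}" "cos (t0 - \<tau>) \<in> {a}" "cos t0 \<in> {a}"
    unfolding single[symmetric] by auto
  then have eqs: "cos (t0 + \<tau>) = cos t0" "cos (t0 - \<tau>) = cos t0" by auto
  have "cos (t0 + \<tau>) + cos (t0 - \<tau>) = 2 * cos t0 * cos \<tau>"
    by (simp add: cos_add cos_diff)
  then have "cos t0 * cos \<tau> = cos t0 * 1" using eqs by simp
  then have "cos \<tau> = 1" using ct0 by simp
  moreover have "cos \<tau> < cos 0"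
  proof (rule cos_monotone_0_pi)
    have "\<tau> \<le> pi/2" unfolding \<tau>_def by simp
    then show "\<tau> \<le> pi" using pi_gt_zero by linarith
  qed (use taup in auto)
  ultimately show False by simp
qed

end
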